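(* Let $-1<a<0$ and $\mathbf{g}\in\mathbb{R}^m$. There is a unique $c\in\mathbb{R}$ (with $g_i + c > 0$ for all $i$) such that $\sum_{i=1}^m (g_i+c)^{1/a} = 1$. Furthermore, let $\mathbf{v}\in\Delta^m$ with all $v_i>0$, and $\kappa\ge 0$. Then: (i) if $g_i \le v_i^a + \kappa$ for all $i$, then $c\ge-\kappa$; (ii) if $g_i \ge v_i^a - \frac{\kappa}{v_i}$ for all $i$, then $c \le \frac{\kappa}{\min_i v_i}$; and if, furthermore, $\kappa \le a^2 v_i^{a+1}$ for all $i$, then $c\le m\kappa$.
   Context: $\Delta^m$ is the probability simplex in $\mathbb{R}^m$. *)

theory Defs
  imports Complex_Main
begin

definition prob_simplex :: "('m::finite \<Rightarrow> real) set" where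
  "prob_simplex = {v. (\<forall>i. 0 \<le> v i) \<and> (\<Sum>i\<in>UNIV. v i) = 1}"

end

theory Submission
  imports Defs "HOL-Analysis.Analysis"
begin


lemma conv_chord:
  fixes b l X :: real
  assumes "b > 0" "0 \<le> l" "l \<le> 1" "X > 0"
  shows "((1-l) + l*X) powr (-b) \<le> (1-l) + l * (X powr (-b))"
proof -
  have y1: "1 powr (1-l) * X powr l \<le> (1-l)*1 + l*X"
    by (rule Youngs_inequality_0) (use assms in auto)
  have "((1-l) + l*X) powr (-b) \<le> (X powr l) powr (-b)"
    by (rule powr_mono2') (use assms y1 in auto)
  also have "\<dots> = (X powr (-b)) powr l" by (simp add: powr_powr mult.commute)
  also have "\<dots> \<le> (1-l)*1 + l * (X powr (-b))"
    using Youngs_inequality_0[of "1-l" l 1 "X powr (-b)"] assms by simp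
  finally show ?thesis by simp
qed



lemma case1_deriv:
  fixes b s :: real
  assumes "0 < b" "b < 1" "s > 0"
  shows "((\<lambda>s. b\<^sup>2 * (s powr b - s powr (b-1)) - (1 - b + b/s) powr (-b)) has_real_derivative
     (b\<^sup>2 * (b * s powr (b-1) - (b-1) * s powr (b-1-1)) - (-b * (1-b+b/s) powr (-b-1)) * (- b / s\<^sup>2))) (at s)"
proof -
  have pos: "1 - b + b/s > 0" using assms by (simp add: add_pos_pos)
  have h1: "((\<lambda>s. s powr b) has_real_derivative b * s powr (b-1)) (at s)"
    by (rule has_real_derivative_powr) (use assms in auto)
  have h2: "((\<lambda>s. s powr (b-1)) has_real_derivative (b-1) * s powr (b-1-1)) (at s)"
    by (rule has_real_derivative_powr) (use assms in auto)
  have h3: "((\<lambda>s. 1 - b + b/s) has_real_derivative (- b / s\<^sup>2)) (at s)"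
    using assms by (auto intro!: derivative_eq_intros simp: power2_eq_square field_simps)
  have h4: "((\<lambda>u. u powr (-b)) has_real_derivative (-b) * (1-b+b/s) powr (-b-1)) (at (1-b+b/s))"
    using has_real_derivative_powr[OF pos, of "-b"] by simp
  have h5: "((\<lambda>s. (1-b+b/s) powr (-b)) has_real_derivative (-b * (1-b+b/s) powr (-b-1)) * (- b / s\<^sup>2)) (at s)"
    by (rule DERIV_chain2[OF h4 h3])
  show ?thesis
    by (intro DERIV_diff DERIV_cmult h1 h2 h5)
qed


lemma case1:
  fixes b s0 :: real
  assumes b: "0 < b" "b < 1" and s0: "1 \<le> s0"
  shows "(1 - b + b/s0) powr (-b) \<le> 1 + b\<^sup>2 * (s0 powr b - s0 powr (b-1))"
proof -
  let ?g = "\<lambda>s. b\<^sup>2 * (s powr b - s powr (b-1)) - (1 - b + b/s) powr (-b)"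
  let ?g' = "\<lambda>s. (b\<^sup>2 * (b * s powr (b-1) - (b-1) * s powr (b-1-1)) - (-b * (1-b+b/s) powr (-b-1)) * (- b / s\<^sup>2))"
  have "?g 1 \<le> ?g s0"
  proof (rule deriv_nonneg_imp_mono[where g = ?g and g' = ?g'])
    fix s assume "s \<in> {1..s0}"
    then have s: "1 \<le> s" by auto
    show "(?g has_real_derivative ?g' s) (at s)" using case1_deriv[of b s] b s by simp
    define P where "P = s*(1-b) + b"
    define Q where "Q = 1 - b + b * s"
    define A where "A = s powr (b-2)"
    have Apos: "A > 0" using s by (simp add: A_def)
    have P1: "P \<ge> 1"
    proof -
      have "s*(1-b) \<ge> 1*(1-b)" by (rule mult_right_mono) (use s b in auto)
      then show ?thesis unfolding P_def by simp
    qed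
    have Q0: "Q > 0" using s b unfolding Q_def by (simp add: add_pos_nonneg)
    have e1: "s powr (b-1) = s * A" using s powr_add[of s 1 "b-2"] unfolding A_def by simp
    have e2: "s powr (b-1-1) = A" unfolding A_def by simp
    have e3: "1-b+b/s = P / s" using s unfolding P_def by (simp add: field_simps)
    have e4: "(P/s) powr (-b-1) = s powr (b+1) / P powr (b+1)"
      proof -
      have m: "-b-1 = -(b+1)" by simp
      have "(P/s) powr (-b-1) = inverse ((P/s) powr (b+1))" unfolding m by (rule powr_minus)
      also have "\<dots> = inverse (P powr (b+1) / s powr (b+1))" using s P1 by (simp add: powr_divide)
      finally show ?thesis by simp
    qed
    have e5: "s powr (b+1) = A * s^3"
      proof -
      have "s powr (3::real) = s^3" using powr_realpow[of s 3] s by simp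
      then show ?thesis using powr_add[of s "b-2" 3] unfolding A_def by (simp add: add.commute)
    qed
    have PP: "P \<le> P powr (b+1)"
      using powr_mono[of 1 "b+1" P] P1 b by simp
    have QP: "s \<le> Q * P"
    proof -
      have "Q * P - s = b*(1-b)*(s-1)^2" unfolding P_def Q_def by (simp add: power2_eq_square algebra_simps)
      moreover have "b*(1-b)*(s-1)^2 \<ge> 0" using b by simp
      ultimately show ?thesis by simp
    qed
    have key: "s \<le> Q * P powr (b+1)"
      proof -
      have "Q*P \<le> Q * P powr (b+1)" by (rule mult_left_mono[OF PP]) (use Q0 in simp)
      then show ?thesis using QP by linarith
    qed
    have Ppos: "P powr (b+1) > 0" using P1 by simp
    have "?g' s = b\<^sup>2 * (A * Q - A * s / P powr (b+1))"
    proof -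
      have X: "(1-b+b/s) powr (-b-1) = A * s ^ 3 / P powr (b+1)" using e3 e4 e5 by simp
      have sq: "A * s ^ 3 / P powr (b+1) / s\<^sup>2 = A * s / P powr (b+1)"
        using s by (simp add: power2_eq_square power3_eq_cube)
      have "?g' s = b\<^sup>2 * (A * Q) - b\<^sup>2 * (A * s ^ 3 / P powr (b+1) / s\<^sup>2)"
        unfolding e1 e2 X Q_def by (simp add: algebra_simps power2_eq_square)
      then show ?thesis unfolding sq by (simp add: algebra_simps)
    qed
    also have "\<dots> \<ge> 0"
    proof -
      have "A * s / P powr (b+1) \<le> A * Q"
        using key Ppos Apos by (simp add: divide_simps mult.commute mult.left_commute)
      then show ?thesis by simp
    qed
    finally show "?g' s \<ge> 0" .
  qed (use s0 in auto)
  then show ?thesis by simp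
qed


lemma case2_deriv:
  fixes b s :: real
  assumes "0 < b" "b < 1" "s > 0" "s \<le> 1"
  shows "((\<lambda>s. b\<^sup>2 * s - (1 + b * (s powr (-b) - s powr (1-b))) powr (-b)) has_real_derivative
     (b\<^sup>2 * 1 - (-b * (1 + b * (s powr (-b) - s powr (1-b))) powr (-b-1)) * (b * ((-b) * s powr (-b-1) - (1-b) * s powr (1-b-1))))) (at s)"
proof -
  have nn: "s powr (1-b) \<le> s powr (-b)"
    by (rule powr_mono') (use assms in auto)
  have pos: "1 + b * (s powr (-b) - s powr (1-b)) > 0" using assms nn
    by (simp add: add_pos_nonneg)
  have h1: "((\<lambda>s. s powr (-b)) has_real_derivative (-b) * s powr (-b-1)) (at s)"
    using has_real_derivative_powr[of s "-b"] assms by simp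
  have h2: "((\<lambda>s. s powr (1-b)) has_real_derivative (1-b) * s powr (1-b-1)) (at s)"
    by (rule has_real_derivative_powr) (use assms in auto)
  have h3: "((\<lambda>s. 1 + b * (s powr (-b) - s powr (1-b))) has_real_derivative (b * ((-b) * s powr (-b-1) - (1-b) * s powr (1-b-1)))) (at s)"
    using DERIV_add[OF DERIV_const[of 1 "at s"] DERIV_cmult[OF DERIV_diff[OF h1 h2], of b]] by simp
  have h4: "((\<lambda>u. u powr (-b)) has_real_derivative (-b) * (1 + b * (s powr (-b) - s powr (1-b))) powr (-b-1)) (at (1 + b * (s powr (-b) - s powr (1-b))))"
    using has_real_derivative_powr[OF pos, of "-b"] by simp
  note h5 = DERIV_chain2[OF h4 h3]
  show ?thesis
    by (intro DERIV_diff DERIV_cmult DERIV_ident h5)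
qed

lemma case2:
  fixes b s0 :: real
  assumes b: "0 < b" "b < 1" and s0: "0 < s0" "s0 \<le> 1"
  shows "(1 + b * (s0 powr (-b) - s0 powr (1-b))) powr (-b) \<le> 1 + b\<^sup>2 * (s0 - 1)"
proof -
  let ?g = "\<lambda>s. b\<^sup>2 * s - (1 + b * (s powr (-b) - s powr (1-b))) powr (-b)"
  let ?g' = "\<lambda>s. (b\<^sup>2 * 1 - (-b * (1 + b * (s powr (-b) - s powr (1-b))) powr (-b-1)) * (b * ((-b) * s powr (-b-1) - (1-b) * s powr (1-b-1))))"
  have "?g 1 \<le> ?g s0"
  proof (rule deriv_nonpos_imp_antimono[where g = ?g and g' = ?g'])
    fix s assume "s \<in> {s0..1}"
    then have s: "0 < s" "s \<le> 1" using s0 by auto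
    show "(?g has_real_derivative ?g' s) (at s)" using case2_deriv[of b s] b s by simp
    define h where "h = 1 + b * (s powr (-b) - s powr (1-b))"
    define A where "A = s powr (-b-1)"
    define H where "H = s * h"
    define R where "R = b + (1-b) * s"
    have Apos: "A > 0" using s by (simp add: A_def)
    have e1: "s powr (-b) = s * A" using s powr_add[of s 1 "-b-1"] unfolding A_def by simp
    have e2: "s powr (1-b) = s * s * A" using s powr_add[of s 1 "-b"] e1 by simp
    have e3: "s powr (1-b-1) = s * A" using e1 by simp
    have nn: "s powr (1-b) \<le> 1" by (rule powr_le1) (use s b in auto)
    have hpos: "h > 0"
    proof -
      have "s powr (1-b) \<le> s powr (-b)" by (rule powr_mono') (use s in auto)
      then have "0 \<le> b * (s powr (-b) - s powr (1-b))" using b by simp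
      then show ?thesis unfolding h_def by linarith
    qed
    have Hpos: "H > 0" using hpos s unfolding H_def by simp
    have HR: "H \<le> R"
    proof -
      have "H = s + b * (s powr (1-b)) * (1 - s)" unfolding H_def h_def e1 e2 by (simp add: algebra_simps)
      also have "\<dots> \<le> s + b * 1 * (1 - s)"
        using nn s b by (intro add_left_mono mult_right_mono mult_left_mono) auto
      finally show ?thesis unfolding R_def by (simp add: algebra_simps)
    qed
    have R1: "R \<le> 1"
    proof -
      have "(1-b) * s \<le> (1-b)*1" by (rule mult_left_mono) (use s b in auto)
      then show ?thesis unfolding R_def by simp
    qed
    have Rpos: "R > 0" using s b unfolding R_def by (simp add: add_pos_nonneg)
    have HH: "H powr (b+1) \<le> H" using powr_le_one_le[of H "b+1"] Hpos HR R1 b by simp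
    have e4: "h powr (-b-1) = s powr (b+1) / H powr (b+1)"
    proof -
      have m: "-b-1 = -(b+1)" by simp
      have hH: "h = H / s" using s unfolding H_def by simp
      have "h powr (-b-1) = inverse ((H/s) powr (b+1))" unfolding m hH by (rule powr_minus)
      also have "\<dots> = inverse (H powr (b+1) / s powr (b+1))" using s Hpos by (simp add: powr_divide)
      finally show ?thesis by simp
    qed
    have e5: "s powr (b+1) * A = 1" using s powr_add[of s "b+1" "-b-1"] unfolding A_def by simp
    have "?g' s = b\<^sup>2 * (1 - R / H powr (b+1))"
    proof -
      have g1: "?g' s = b\<^sup>2 * 1 - (-b * h powr (-b-1)) * (b * ((-b) * A - (1-b) * (s * A)))"
        unfolding h_def[symmetric] A_def[symmetric] e3 by (rule refl)
      have "?g' s = b\<^sup>2 - b\<^sup>2 * (h powr (-b-1) * A * R)"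
        unfolding g1 R_def by (simp add: algebra_simps power2_eq_square)
      also have "h powr (-b-1) * A * R = R / H powr (b+1)"
        unfolding e4 using e5 by (simp add: field_simps)
      finally show ?thesis by (simp add: algebra_simps)
    qed
    also have "\<dots> \<le> 0"
    proof -
      have "H powr (b+1) \<le> R" using HH HR by linarith
      then have "1 \<le> R / H powr (b+1)" using Hpos by simp
      then show ?thesis by (intro mult_nonneg_nonpos) auto
    qed
    finally show "?g' s \<le> 0" .
  qed (use s0 in auto)
  then show ?thesis by (simp add: algebra_simps)
qed


lemma key:
  fixes b s K :: real
  assumes b: "0 < b" "b < 1" and s: "s > 0" and K: "0 \<le> K" "K \<le> b\<^sup>2" "K \<le> b\<^sup>2 * s powr (1-b)"
  shows "(1 - K*(1-1/s)/b) powr (-b) \<le> 1 + K*(s powr b - s powr (b-1))"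
proof -
  define T where "T = s powr (1-b)"
  have Tpos: "T > 0" using s by (simp add: T_def)
  have e1: "s powr (-b) = T / s" using s powr_add[of s 1 "-b"] unfolding T_def by (simp add: field_simps)
  have e2: "s powr (b-1) = 1 / T" using s powr_minus[of s "1-b"] unfolding T_def by (simp add: divide_simps)
  have e3: "s powr b = s / T" using s powr_add[of s 1 "b-1"] e2 by simp
  show ?thesis
  proof (cases "s \<ge> 1")
    case True
    define l where "l = K / b\<^sup>2"
    define X where "X = 1 - b + b/s"
    have l0: "0 \<le> l" "l \<le> 1" using K b unfolding l_def by auto
    have Xpos: "X > 0" using b s unfolding X_def by (simp add: add_pos_pos)
    have eq: "1 - K*(1-1/s)/b = (1-l) + l*X"
      unfolding l_def X_def using b s by (simp add: field_simps power2_eq_square)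
    have "(1 - K*(1-1/s)/b) powr (-b) \<le> (1-l) + l * (X powr (-b))"
      unfolding eq by (rule conv_chord) (use b l0 Xpos in auto)
    also have "\<dots> \<le> (1-l) + l * (1 + b\<^sup>2 * (s powr b - s powr (b-1)))"
      using case1[OF b True] l0 unfolding X_def by (intro add_left_mono mult_left_mono) auto
    also have "\<dots> = 1 + K*(s powr b - s powr (b-1))"
      unfolding l_def using b by (simp add: field_simps)
    finally show ?thesis .
  next
    case False
    define l where "l = K / (b\<^sup>2 * T)"
    define X where "X = 1 + b * (s powr (-b) - s powr (1-b))"
    have l0: "0 \<le> l" "l \<le> 1" using K b Tpos unfolding l_def T_def by auto
    have Xpos: "X > 0"
    proof -
      have "s powr (1-b) \<le> s powr (-b)" by (rule powr_mono') (use s False in auto)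
      then have "0 \<le> b * (s powr (-b) - s powr (1-b))" using b by simp
      then show ?thesis unfolding X_def by linarith
    qed
    have eq: "1 - K*(1-1/s)/b = (1-l) + l*X"
      unfolding l_def X_def e1 T_def[symmetric] using b s Tpos by (simp add: field_simps power2_eq_square)
    have "(1 - K*(1-1/s)/b) powr (-b) \<le> (1-l) + l * (X powr (-b))"
      unfolding eq by (rule conv_chord) (use b l0 Xpos in auto)
    also have "\<dots> \<le> (1-l) + l * (1 + b\<^sup>2 * (s - 1))"
      using case2[OF b s] False l0 unfolding X_def by (intro add_left_mono mult_left_mono) auto
    also have "\<dots> = 1 + K*(s powr b - s powr (b-1))"
      unfolding l_def e2 e3 using b Tpos by (simp add: field_simps)
    finally show ?thesis .
  qed
qed


lemma per_i:
  fixes a m v k :: real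
  assumes a: "-1 < a" "a < 0" and m: "m > 0" and v: "v > 0" and k: "k \<ge> 0"
    "k * m powr (a+1) \<le> a\<^sup>2" "k \<le> a\<^sup>2 * v powr (a+1)"
  shows "v powr a + m*k - k/v > 0"
    and "(v powr a + m*k - k/v) powr (1/a) \<le> v * (1 + k * m powr a * (m - 1/v) / a)"
proof -
  have va: "v powr (a+1) = v powr a * v" using powr_add[of v a 1] v by simp
  have "k / v \<le> a\<^sup>2 * v powr a" using k(3) v unfolding va by (simp add: divide_simps)
  moreover have "a\<^sup>2 < 1" using a by (simp add: abs_square_less_1)
  moreover have "v powr a > 0" using v by simp
  ultimately have "k / v < v powr a"
    by (smt (verit) mult_less_cancel_right2)
  then show ypos: "v powr a + m*k - k/v > 0" using m k by (smt (verit) mult_nonneg_nonneg)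
  define b where "b = -a"
  define s where "s = m * v"
  define K where "K = k * m powr (a+1)"
  have b: "0 < b" "b < 1" using a by (auto simp: b_def)
  have s: "s > 0" using m v by (simp add: s_def)
  have K: "0 \<le> K" "K \<le> b\<^sup>2" "K \<le> b\<^sup>2 * s powr (1-b)"
  proof -
    show "0 \<le> K" using k m by (simp add: K_def)
    show "K \<le> b\<^sup>2" using k by (simp add: K_def b_def)
    have "s powr (1-b) = m powr (a+1) * v powr (a+1)" using m v by (simp add: s_def b_def powr_mult add.commute)
    then have "b\<^sup>2 * s powr (1-b) = m powr (a+1) * (a\<^sup>2 * v powr (a+1))" by (simp add: b_def)
    also have "\<dots> \<ge> m powr (a+1) * k" using k(3) by (intro mult_left_mono) auto
    finally show "K \<le> b\<^sup>2 * s powr (1-b)" by (simp add: K_def mult.commute)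
  qed
  note kk = key[OF b s K]
  define R where "R = 1 + k * m powr a * (m - 1/v) / a"
  have ma: "m powr (a+1) = m powr a * m" using powr_add[of m a 1] m by simp
  have eqR: "1 - K*(1-1/s)/b = R"
    unfolding R_def K_def b_def s_def ma using m v a by (simp add: field_simps)
  have Rpos: "R > 0"
  proof -
    have "K*(1-1/s)/b < 1"
    proof (cases "1 - 1/s \<le> 0")
      case True then show ?thesis using K b by (smt (verit) divide_nonpos_pos mult_nonneg_nonpos)
    next
      case False
      have "1 - 1/s < 1" using s by simp
      then have "K*(1-1/s) \<le> b\<^sup>2 * 1" using K False
        by (intro mult_mono) auto
      then have "K*(1-1/s)/b \<le> b" using b by (simp add: divide_simps power2_eq_square)
      then show ?thesis using b by linarith
    qed
    then show ?thesis using eqR by simp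
  qed
  have eqY: "1 + K*(s powr b - s powr (b-1)) = (v powr a + m*k - k/v) / v powr a"
  proof -
    have sb: "s powr b = m powr (-a) * v powr (-a)" unfolding s_def b_def using m v by (simp add: powr_mult)
    have sb1: "s powr (b-1) = m powr (-a) * v powr (-a) / (m * v)"
      unfolding s_def b_def using m v powr_add[of "m * v" "-a" "-1"]
      by (simp add: powr_mult powr_minus divide_simps)
    have mm: "m powr (-a) = m / m powr (a+1)" using powr_add[of m "a+1" "-a"] m by (simp add: field_simps)
    have vv: "v powr (-a) = 1 / v powr a" using powr_add[of v "-a" a] v by (simp add: field_simps)
    have vpos: "v powr a > 0" "m powr (a+1) > 0" using v m by auto
    show ?thesis unfolding sb sb1 K_def mm vv using m v vpos
      by (simp add: field_simps)
  qed
  have "R powr a \<le> (v powr a + m*k - k/v) / v powr a"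
    using kk[unfolded eqR eqY] by (simp add: b_def)
  then have "(v * R) powr a \<le> v powr a + m*k - k/v"
    using v Rpos by (simp add: powr_mult divide_simps ac_simps)
  then have "(v powr a + m*k - k/v) powr (1/a) \<le> ((v * R) powr a) powr (1/a)"
    using a v Rpos by (intro powr_mono2') auto
  also have "\<dots> = v * R" using a v Rpos by (simp add: powr_powr)
  finally show "(v powr a + m*k - k/v) powr (1/a) \<le> v * (1 + k * m powr a * (m - 1/v) / a)"
    unfolding R_def .
qed


lemma sum_eq_lemma:
  fixes v :: "'m::finite \<Rightarrow> real" and t :: real
  assumes "(\<Sum>i\<in>UNIV. v i) = 1" "\<And>i. v i > 0"
  shows "(\<Sum>i\<in>UNIV. v i * (1 + t * (real CARD('m) - 1 / v i))) = 1"
proof -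
  have "(\<Sum>i\<in>UNIV. v i * (1 + t * (real CARD('m) - 1 / v i))) = (\<Sum>i\<in>UNIV. v i + t * real CARD('m) * v i - t)"
  proof (intro sum.cong refl)
    fix i :: 'm
    have "v i \<noteq> 0" using assms(2)[of i] by simp
    then show "v i * (1 + t * (real CARD('m) - 1 / v i)) = v i + t * real CARD('m) * v i - t"
      by (simp add: field_simps)
  qed
  also have "\<dots> = (\<Sum>i\<in>UNIV. v i) + t * real CARD('m) * (\<Sum>i\<in>UNIV. v i) - real CARD('m) * t"
    by (simp add: sum.distrib sum_subtractf sum_distrib_left)
  finally show ?thesis using assms(1) by simp
qed

lemma exists_small:
  fixes v :: "'m::finite \<Rightarrow> real"
  assumes "(\<Sum>i\<in>UNIV. v i) = 1"
  shows "\<exists>j. v j \<le> 1 / real CARD('m)"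
proof (rule ccontr)
  assume "\<not> ?thesis"
  then have "\<And>i. 1 / real CARD('m) < v i" by (simp add: not_le)
  then have "(\<Sum>i\<in>(UNIV::'m set). 1 / real CARD('m)) < (\<Sum>i\<in>UNIV. v i)"
    by (intro sum_strict_mono) auto
  then show False using assms by simp
qed

theorem lemma7:
  fixes a :: real and g :: "'m::finite \<Rightarrow> real"
  assumes "-1 < a" and "a < 0"
  shows "(\<exists>!c::real. (\<forall>i. g i + c > 0) \<and> (\<Sum>i\<in>UNIV. (g i + c) powr (1 / a)) = 1)
     \<and> (\<forall>(v::'m \<Rightarrow> real) (\<kappa>::real) (c::real).
          (\<forall>i. g i + c > 0) \<and> (\<Sum>i\<in>UNIV. (g i + c) powr (1 / a)) = 1
          \<and> v \<in> prob_simplex \<and> (\<forall>i. v i > 0) \<and> \<kappa> \<ge> 0 \<longrightarrow>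
            ((\<forall>i. g i \<le> v i powr a + \<kappa>) \<longrightarrow> c \<ge> - \<kappa>)
          \<and> ((\<forall>i. g i \<ge> v i powr a - \<kappa> / v i) \<longrightarrow>
               c \<le> \<kappa> / Min (range v)
             \<and> ((\<forall>i. \<kappa> \<le> a\<^sup>2 * v i powr (a + 1)) \<longrightarrow> c \<le> real (card (UNIV :: 'm set)) * \<kappa>)))"
proof -
  have pneg: "1/a < 0" using assms by simp
  have inv_pow: "\<And>x. x > 0 \<Longrightarrow> (x powr a) powr (1/a) = x"
    using assms by (simp add: powr_powr)
  define F where "F = (\<lambda>c. \<Sum>i\<in>UNIV. (g i + c) powr (1 / a))"
  define mg where "mg = Min (range g)"
  have mg_le: "\<And>i. mg \<le> g i" unfolding mg_def by simp
  have "mg \<in> range g" unfolding mg_def by (rule Min_in) auto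
  then obtain i0 where i0: "g i0 = mg" by auto
  define N where "N = real CARD('m)"
  have N1: "N \<ge> 1" unfolding N_def by (simp add: Suc_le_eq)
  define c0 where "c0 = 1/2 - mg"
  define c1 where "c1 = N powr (-a) - mg"
  have Na: "N powr (-a) \<ge> 1" using N1 assms by (simp add: ge_one_powr_ge_zero)
  have c01: "c0 \<le> c1" using Na unfolding c0_def c1_def by simp
  have posc: "\<And>c i. c0 \<le> c \<Longrightarrow> g i + c > 0"
  proof -
    fix c i assume "c0 \<le> c" then show "g i + c > 0" using mg_le[of i] unfolding c0_def by simp
  qed
  have Fc0: "F c0 \<ge> 1"
  proof -
    have t1: "(2::real) powr (1/a) \<le> 2 powr 0" by (rule powr_mono) (use pneg in auto)
    have t2: "(2::real) powr (1/a) > 0" by simp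
    have "(1/2::real) powr (1/a) = 1 / 2 powr (1/a)" by (simp add: powr_divide)
    also have "\<dots> \<ge> 1" using t1 t2 by simp
    finally have "(1/2::real) powr (1/a) \<ge> 1" .
    also have "(1/2::real) = g i0 + c0" using i0 unfolding c0_def by simp
    also have "(g i0 + c0) powr (1/a) \<le> F c0" unfolding F_def
      by (rule member_le_sum) auto
    finally show ?thesis .
  qed
  have Fc1: "F c1 \<le> 1"
  proof -
    have "F c1 \<le> real (card (UNIV::'m set)) * (1/N)" unfolding F_def
    proof (rule sum_bounded_above)
      fix i :: 'm
      have "N powr (-a) \<le> g i + c1" using mg_le[of i] unfolding c1_def by simp
      then have "(g i + c1) powr (1/a) \<le> (N powr (-a)) powr (1/a)"
        using pneg N1 by (intro powr_mono2') auto
      also have "\<dots> = N powr (-a * (1/a))" by (rule powr_powr)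
      also have "-a * (1/a) = -1" using assms by simp
      also have "N powr (-1) = 1/N" using N1 by (simp add: powr_minus divide_inverse)
      finally show "(g i + c1) powr (1/a) \<le> 1/N" .
    qed
    then show ?thesis unfolding N_def by simp
  qed
  have cont: "continuous_on {c0..c1} F"
    unfolding F_def
    apply (intro continuous_on_sum continuous_intros ballI)
    using posc by (metis atLeastAtMost_iff less_irrefl)
  obtain c where c: "c0 \<le> c" "c \<le> c1" "F c = 1"
    using IVT2'[of F c1 1 c0, OF Fc1 Fc0 c01 cont] by auto
  have strict: "\<And>c c'. (\<forall>i. g i + c > 0) \<Longrightarrow> c < c' \<Longrightarrow> F c' < F c"
  proof -
    fix c c' :: real assume h: "\<forall>i. g i + c > 0" "c < c'"
    show "F c' < F c" unfolding F_def
      by (rule sum_strict_mono) (use h pneg in \<open>auto intro!: powr_less_mono2_neg\<close>)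
  qed
  have part1: "\<exists>!c::real. (\<forall>i. g i + c > 0) \<and> (\<Sum>i\<in>UNIV. (g i + c) powr (1 / a)) = 1"
  proof (rule ex1I[of _ c])
    show "(\<forall>i. g i + c > 0) \<and> (\<Sum>i\<in>UNIV. (g i + c) powr (1 / a)) = 1"
      using c posc unfolding F_def by auto
  next
    fix c' assume h: "(\<forall>i. g i + c' > 0) \<and> (\<Sum>i\<in>UNIV. (g i + c') powr (1 / a)) = 1"
    show "c' = c"
    proof (rule ccontr)
      assume "c' \<noteq> c"
      then consider "c' < c" | "c < c'" by linarith
      then show False
      proof cases
        case 1 then show False using strict[of c' c] h c unfolding F_def by auto
      next
        case 2 then show False using strict[of c c'] h c posc unfolding F_def by auto
      qed
    qed
  qed
  have part2: "((\<forall>i. g i \<le> v i powr a + \<kappa>) \<longrightarrow> c \<ge> - \<kappa>)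
          \<and> ((\<forall>i. g i \<ge> v i powr a - \<kappa> / v i) \<longrightarrow>
               c \<le> \<kappa> / Min (range v)
             \<and> ((\<forall>i. \<kappa> \<le> a\<^sup>2 * v i powr (a + 1)) \<longrightarrow> c \<le> real (card (UNIV :: 'm set)) * \<kappa>))"
    if H: "\<forall>i. g i + c > 0" "(\<Sum>i\<in>UNIV. (g i + c) powr (1 / a)) = 1"
       "v \<in> prob_simplex" "\<forall>i. v i > 0" "\<kappa> \<ge> 0"
    for v :: "'m \<Rightarrow> real" and \<kappa> c :: real
  proof -
    have vs: "(\<Sum>i\<in>UNIV. v i) = 1" using H(3) unfolding prob_simplex_def by simp
    have vpos: "\<And>i. v i > 0" using H(4) by simp
    have P1: "c \<ge> - \<kappa>" if G: "\<forall>i. g i \<le> v i powr a + \<kappa>"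
    proof (rule ccontr)
      assume "\<not> c \<ge> - \<kappa>"
      then have "\<And>i. g i + c < v i powr a" using G by (smt (verit))
      then have "\<And>i. v i < (g i + c) powr (1/a)"
        using inv_pow[OF vpos] H(1) pneg by (metis powr_less_mono2_neg)
      then have "(\<Sum>i\<in>UNIV. v i) < (\<Sum>i\<in>UNIV. (g i + c) powr (1 / a))"
        by (intro sum_strict_mono) auto
      then show False using vs H(2) by simp
    qed
    have P2: "c \<le> \<kappa> / Min (range v)" if G: "\<forall>i. g i \<ge> v i powr a - \<kappa> / v i"
    proof (rule ccontr)
      assume A: "\<not> c \<le> \<kappa> / Min (range v)"
      have "Min (range v) \<in> range v" by (rule Min_in) auto
      then obtain j where j: "v j = Min (range v)" by (metis rangeE)
      have "\<And>i. g i + c > v i powr a"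
      proof -
        fix i
        have "v j \<le> v i" unfolding j by simp
        then have "\<kappa> / v i \<le> \<kappa> / v j" using vpos[of i] vpos[of j] H(5)
          by (intro divide_left_mono) auto
        then show "g i + c > v i powr a" using A G j by (smt (verit))
      qed
      then have "\<And>i. (g i + c) powr (1/a) < v i"
      proof -
        fix i assume gi: "\<And>i. g i + c > v i powr a"
        have "(g i + c) powr (1/a) < (v i powr a) powr (1/a)"
          by (rule powr_less_mono2_neg) (use pneg gi[of i] vpos[of i] in auto)
        then show "(g i + c) powr (1/a) < v i" using inv_pow[OF vpos[of i]] by simp
      qed
      then have "(\<Sum>i\<in>UNIV. (g i + c) powr (1 / a)) < (\<Sum>i\<in>UNIV. v i)"
        by (intro sum_strict_mono) auto
      then show False using vs H(2) by simp
    qed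
    have P3: "c \<le> real (card (UNIV :: 'm set)) * \<kappa>"
      if G: "\<forall>i. g i \<ge> v i powr a - \<kappa> / v i" and Kc: "\<forall>i. \<kappa> \<le> a\<^sup>2 * v i powr (a + 1)"
    proof (rule ccontr)
      assume A: "\<not> c \<le> real (card (UNIV :: 'm set)) * \<kappa>"
      have Npos: "N > 0" using N1 by simp
      obtain j where j: "v j \<le> 1 / N" using exists_small[OF vs] unfolding N_def by auto
      have KN: "\<kappa> * N powr (a+1) \<le> a\<^sup>2"
      proof -
        have "v j powr (a+1) \<le> (1/N) powr (a+1)"
          using j vpos[of j] assms by (intro powr_mono2) auto
        then have "\<kappa> \<le> a\<^sup>2 * (1/N) powr (a+1)" using Kc[rule_format, of j]
          by (smt (verit) mult_left_mono zero_le_power2)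
        then have "\<kappa> * N powr (a+1) \<le> a\<^sup>2 * ((1/N) powr (a+1) * N powr (a+1))"
          using Npos by (simp add: mult_right_mono mult.assoc)
        also have "(1/N) powr (a+1) * N powr (a+1) = 1" using Npos by (simp add: powr_divide)
        finally show ?thesis by simp
      qed
      have each: "\<And>i. (g i + c) powr (1/a) < v i * (1 + \<kappa> * N powr a * (N - 1 / v i) / a)"
      proof -
        fix i
        have y0: "v i powr a + N * \<kappa> - \<kappa> / v i > 0"
          and yb: "(v i powr a + N * \<kappa> - \<kappa> / v i) powr (1/a) \<le> v i * (1 + \<kappa> * N powr a * (N - 1 / v i) / a)"
          using per_i[of a N "v i" \<kappa>] assms Npos vpos[of i] H(5) KN Kc by auto
        have "g i + c > v i powr a + N * \<kappa> - \<kappa> / v i" using G A unfolding N_def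
          by (smt (verit) mult.commute)
        then have "(g i + c) powr (1/a) < (v i powr a + N * \<kappa> - \<kappa> / v i) powr (1/a)"
          using y0 pneg by (intro powr_less_mono2_neg) auto
        then show "(g i + c) powr (1/a) < v i * (1 + \<kappa> * N powr a * (N - 1 / v i) / a)"
          using yb by linarith
      qed
      have "(\<Sum>i\<in>UNIV. (g i + c) powr (1 / a)) < (\<Sum>i\<in>UNIV. v i * (1 + \<kappa> * N powr a * (N - 1 / v i) / a))"
        using each by (intro sum_strict_mono) auto
      also have "\<dots> = (\<Sum>i\<in>UNIV. v i * (1 + (\<kappa> * N powr a / a) * (real CARD('m) - 1 / v i)))"
        unfolding N_def by (simp add: mult.assoc)
      also have "\<dots> = 1" by (rule sum_eq_lemma[OF vs vpos])
      finally show False using H(2) by simp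
    qed
    show ?thesis using P1 P2 P3 by blast
  qed
  show ?thesis using part1 part2 by blast
qed
end
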